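(* Let $\mathcal{M}$ be a matroid on $[n]$ and $\gamma$ a basic $\ell$-cover of $\mathcal{M}$. Then the focal complex $\mathcal{M}(\gamma)$ is (the independence complex of) a submatroid of $\mathcal{M}$, and $r(\mathcal{M}(\gamma))=r(\mathcal{M})$.
   Context: Matroids are identified with their independence complexes; $r$ denotes rank. For $\gamma:[n]\to\mathbb{N}_0$ and $S\subseteq[n]$, $\gamma(S)=\sum_{i\in S}\gamma(i)$. $\gamma$ is an $\ell$-cover of $\mathcal{M}$ if $\gamma(F)\ge\ell$ for every basis $F$ of $\mathcal{M}$, and basic if minimal among $\ell$-covers in the pointwise order. $\mathcal{M}(\gamma)$ is the simplicial complex generated by the bases $F$ of $\mathcal{M}$ with $\gamma(F)=\ell$. *)

theory Defs
  imports Main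
begin

definition indep_matroid :: "nat set \<Rightarrow> nat set set \<Rightarrow> bool" where
  "indep_matroid E I \<longleftrightarrow> finite E \<and> (\<forall>X\<in>I. X \<subseteq> E) \<and> {} \<in> I
     \<and> (\<forall>X Y. X \<in> I \<longrightarrow> Y \<subseteq> X \<longrightarrow> Y \<in> I)
     \<and> (\<forall>X Y. X \<in> I \<longrightarrow> Y \<in> I \<longrightarrow> card X < card Y \<longrightarrow> (\<exists>y\<in>Y - X. insert y X \<in> I))"

definition is_basis :: "nat set set \<Rightarrow> nat set \<Rightarrow> bool" where
  "is_basis I F \<longleftrightarrow> F \<in> I \<and> (\<forall>G\<in>I. F \<subseteq> G \<longrightarrow> G = F)"

definition mrank :: "nat set set \<Rightarrow> nat" where
  "mrank I = Max (card ` I)"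

definition is_cover :: "nat set set \<Rightarrow> nat \<Rightarrow> (nat \<Rightarrow> nat) \<Rightarrow> bool" where
  "is_cover I l \<gamma> \<longleftrightarrow> (\<forall>F. is_basis I F \<longrightarrow> sum \<gamma> F \<ge> l)"

definition is_basic_cover :: "nat set \<Rightarrow> nat set set \<Rightarrow> nat \<Rightarrow> (nat \<Rightarrow> nat) \<Rightarrow> bool" where
  "is_basic_cover E I l \<gamma> \<longleftrightarrow> is_cover I l \<gamma> \<and>
     (\<forall>\<gamma>'. is_cover I l \<gamma>' \<longrightarrow> (\<forall>i\<in>E. \<gamma>' i \<le> \<gamma> i) \<longrightarrow> (\<forall>i\<in>E. \<gamma>' i = \<gamma> i))"

definition focal_complex :: "nat set set \<Rightarrow> nat \<Rightarrow> (nat \<Rightarrow> nat) \<Rightarrow> nat set set" where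
  "focal_complex I l \<gamma> = {G. \<exists>F. is_basis I F \<and> sum \<gamma> F = l \<and> G \<subseteq> F}"

end

theory Submission
  imports Defs
begin

lemma im_finite: "indep_matroid E I \<Longrightarrow> finite I"
  unfolding indep_matroid_def by (meson Pow_iff finite_Pow_iff finite_subset subsetI)

lemma im_fin: "indep_matroid E I \<Longrightarrow> X \<in> I \<Longrightarrow> finite X"
  unfolding indep_matroid_def by (meson finite_subset)

lemma im_sub: "indep_matroid E I \<Longrightarrow> X \<in> I \<Longrightarrow> Y \<subseteq> X \<Longrightarrow> Y \<in> I"
  unfolding indep_matroid_def by blast

lemma im_aug: "indep_matroid E I \<Longrightarrow> X \<in> I \<Longrightarrow> Y \<in> I \<Longrightarrow> card X < card Y
   \<Longrightarrow> \<exists>y\<in>Y-X. insert y X \<in> I"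
  unfolding indep_matroid_def by blast

lemma card_le_rank: "indep_matroid E I \<Longrightarrow> X \<in> I \<Longrightarrow> card X \<le> mrank I"
  unfolding mrank_def using im_finite by (metis Max_ge finite_imageI imageI)

lemma rank_attained: "indep_matroid E I \<Longrightarrow> \<exists>B\<in>I. card B = mrank I"
proof -
  assume a: "indep_matroid E I"
  have "{} \<in> I" using a unfolding indep_matroid_def by blast
  then have "card ` I \<noteq> {}" by blast
  then have "mrank I \<in> card ` I" unfolding mrank_def using im_finite[OF a] by (simp add: Max_in)
  then show ?thesis by auto
qed

lemma basis_iff: assumes a: "indep_matroid E I"
  shows "is_basis I F \<longleftrightarrow> F \<in> I \<and> card F = mrank I"
proof
  assume b: "is_basis I F"
  then have F: "F \<in> I" unfolding is_basis_def by blast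
  show "F \<in> I \<and> card F = mrank I"
  proof (rule ccontr)
    assume "\<not> ?thesis"
    then have "card F < mrank I" using F card_le_rank[OF a F] by auto
    moreover obtain B where "B \<in> I" "card B = mrank I" using rank_attained[OF a] by blast
    ultimately obtain y where y: "y \<in> B - F" "insert y F \<in> I" using im_aug[OF a F] by metis
    then show False using b unfolding is_basis_def by blast
  qed
next
  assume b: "F \<in> I \<and> card F = mrank I"
  show "is_basis I F" unfolding is_basis_def
  proof (intro conjI ballI impI)
    show "F \<in> I" using b by blast
    fix G assume G: "G \<in> I" "F \<subseteq> G"
    have "card G \<le> card F" using card_le_rank[OF a G(1)] b by simp
    then show "G = F" using G im_fin[OF a G(1)] card_seteq[of G F] by auto
  qed
qed

lemma extend: assumes a: "indep_matroid E I" and A: "A \<in> I" "A \<subseteq> S"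
  shows "\<exists>G\<in>I. A \<subseteq> G \<and> G \<subseteq> S \<and> (\<forall>B\<in>I. B \<subseteq> S \<longrightarrow> card B \<le> card G)"
proof -
  let ?P = "\<lambda>G. G \<in> I \<and> A \<subseteq> G \<and> G \<subseteq> S"
  have "\<exists>G. ?P G \<and> (\<forall>H. ?P H \<longrightarrow> card H \<le> card G)"
    apply (rule ex_has_greatest_nat[where k = A and b = "Suc (mrank I)"])
    using A card_le_rank[OF a] by (auto simp: less_Suc_eq_le)
  then obtain G where G: "?P G" "\<And>H. ?P H \<Longrightarrow> card H \<le> card G" by blast
  have "\<forall>B\<in>I. B \<subseteq> S \<longrightarrow> card B \<le> card G"
  proof (intro ballI impI)
    fix B assume B: "B \<in> I" "B \<subseteq> S"
    show "card B \<le> card G"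
    proof (rule ccontr)
      assume "\<not> ?thesis"
      then obtain y where y: "y \<in> B - G" "insert y G \<in> I" using im_aug[OF a _ B(1)] G(1) by force
      then have "card (insert y G) \<le> card G" using G B by (intro G(2)) auto
      then show False using y im_fin[OF a, of G] G(1) by simp
    qed
  qed
  then show ?thesis using G by blast
qed


lemma sym_exch:
  assumes a: "indep_matroid E I" and B1: "is_basis I B1" and B2: "is_basis I B2"
    and x: "x \<in> B1" "x \<notin> B2"
  shows "\<exists>y\<in>B2 - B1. insert y (B1 - {x}) \<in> I \<and> insert x (B2 - {y}) \<in> I"
proof -
  define r where "r = mrank I"
  have B1I: "B1 \<in> I" "card B1 = r" using B1 basis_iff[OF a] r_def by auto
  have B2I: "B2 \<in> I" "card B2 = r" using B2 basis_iff[OF a] r_def by auto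
  have fB1: "finite B1" and fB2: "finite B2" using im_fin[OF a] B1I B2I by auto
  define D where "D = {y\<in>B2. insert x (B2 - {y}) \<in> I}"
  have DB2: "D \<subseteq> B2" unfolding D_def by blast
  have DI: "D \<in> I" using im_sub[OF a B2I(1) DB2] .
  have xD: "x \<notin> D" using DB2 x by blast
  have claim1: "insert x D \<notin> I"
  proof
    assume xDI: "insert x D \<in> I"
    obtain G where G: "G \<in> I" "insert x D \<subseteq> G" "G \<subseteq> insert x B2"
      "\<forall>B\<in>I. B \<subseteq> insert x B2 \<longrightarrow> card B \<le> card G"
      using extend[OF a xDI, of "insert x B2"] DB2 by blast
    have "card G \<ge> r" using G(4) B2I by auto
    moreover have "card G \<le> r" using card_le_rank[OF a G(1)] r_def by simp
    ultimately have cG: "card G = r" by simp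
    have "card (insert x B2) = Suc r" using B2I fB2 x by simp
    then have "G \<noteq> insert x B2" using cG by auto
    then obtain y where y: "y \<in> insert x B2" "y \<notin> G" using G(3) by blast
    have yx: "y \<noteq> x" using y G(2) by blast
    have yB2: "y \<in> B2" using y yx by blast
    have yD: "y \<notin> D" using y G(2) by blast
    have sub: "G \<subseteq> insert x (B2 - {y})" using G(3) y by blast
    have "card (insert x (B2 - {y})) = r" using fB2 yB2 x B2I
      by (simp add: card_Diff_singleton) (metis One_nat_def Suc_pred card_gt_0_iff empty_iff)
    then have "G = insert x (B2 - {y})" using sub cG fB2 card_seteq[of "insert x (B2 - {y})" G] by auto
    then have "y \<in> D" unfolding D_def using G(1) yB2 by blast
    then show False using yD by blast
  qed
  define U where "U = (B1 - {x}) \<union> D"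
  obtain G where G: "G \<in> I" "D \<subseteq> G" "G \<subseteq> U" "\<forall>B\<in>I. B \<subseteq> U \<longrightarrow> card B \<le> card G"
    using extend[OF a DI, of U] unfolding U_def by blast
  have B1xI: "B1 - {x} \<in> I" using im_sub[OF a B1I(1)] by blast
  have c1: "card (B1 - {x}) \<le> card G" using G(4) B1xI unfolding U_def by blast
  have cB1x: "card (B1 - {x}) = r - 1" using B1I x fB1 by simp
  have rpos: "r > 0" using B1I x fB1 card_gt_0_iff by blast
  have fG: "finite G" using im_fin[OF a G(1)] .
  have "\<exists>y\<in>D - B1. insert y (B1 - {x}) \<in> I"
  proof (cases "card (B1 - {x}) < card G")
    case True
    then obtain y where y: "y \<in> G - (B1 - {x})" "insert y (B1 - {x}) \<in> I"
      using im_aug[OF a B1xI G(1)] by blast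
    have "y \<in> D" using y G(3) unfolding U_def by blast
    moreover then have "y \<notin> B1" using y xD by blast
    ultimately show ?thesis using y by blast
  next
    case False
    then have "card G < card B1" using c1 cB1x B1I rpos by simp
    then obtain b where b: "b \<in> B1 - G" "insert b G \<in> I" using im_aug[OF a G(1) B1I(1)] by blast
    show ?thesis
    proof (cases "b = x")
      case True
      then have "insert x D \<in> I" using im_sub[OF a b(2)] G(2) by blast
      then show ?thesis using claim1 by blast
    next
      case False
      then have "insert b G \<subseteq> U" using b G(3) unfolding U_def by blast
      then have "card (insert b G) \<le> card G" using G(4) b(2) by blast
      then show ?thesis using b fG by simp
    qed
  qed
  then obtain y where y: "y \<in> D" "y \<notin> B1" "insert y (B1 - {x}) \<in> I" by blast
  then show ?thesis unfolding D_def by blast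
qed


lemma card_swap: "finite B \<Longrightarrow> x \<in> B \<Longrightarrow> y \<notin> B \<Longrightarrow> card (insert y (B - {x})) = card B"
proof -
  assume "finite B" "x \<in> B" "y \<notin> B"
  moreover then have "card B > 0" using card_gt_0_iff by blast
  ultimately show ?thesis by (simp add: card_Diff_singleton)
qed

lemma sum_swap: "finite B \<Longrightarrow> x \<in> B \<Longrightarrow> y \<notin> B \<Longrightarrow>
   sum g (insert y (B - {x})) + g x = sum g B + (g y :: nat)"
  by (simp add: sum.remove)

lemma wexch:
  fixes \<gamma> :: "nat \<Rightarrow> nat"
  assumes a: "indep_matroid E I" and cov: "\<forall>F. is_basis I F \<longrightarrow> sum \<gamma> F \<ge> l"
    and B1: "is_basis I B1" and B2: "is_basis I B2"
    and s1: "sum \<gamma> B1 = l" and s2: "sum \<gamma> B2 = l"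
    and x: "x \<in> B1" "x \<notin> B2"
  shows "\<exists>y\<in>B2 - B1. is_basis I (insert y (B1 - {x})) \<and> sum \<gamma> (insert y (B1 - {x})) = l"
proof -
  obtain y where y: "y \<in> B2" "y \<notin> B1" "insert y (B1 - {x}) \<in> I" "insert x (B2 - {y}) \<in> I"
    using sym_exch[OF a B1 B2 x] by blast
  have B1I: "B1 \<in> I" "card B1 = mrank I" using B1 basis_iff[OF a] by auto
  have B2I: "B2 \<in> I" "card B2 = mrank I" using B2 basis_iff[OF a] by auto
  have fB1: "finite B1" and fB2: "finite B2" using im_fin[OF a] B1I B2I by auto
  have b1: "is_basis I (insert y (B1 - {x}))"
    using basis_iff[OF a] y(3) card_swap[OF fB1 x(1) y(2)] B1I by simp
  have b2: "is_basis I (insert x (B2 - {y}))"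
    using basis_iff[OF a] y(4) card_swap[OF fB2 y(1) x(2)] B2I by simp
  have e1: "sum \<gamma> (insert y (B1 - {x})) + \<gamma> x = sum \<gamma> B1 + \<gamma> y" using sum_swap[OF fB1 x(1) y(2), of \<gamma>] .
  have e2: "sum \<gamma> (insert x (B2 - {y})) + \<gamma> y = sum \<gamma> B2 + \<gamma> x" using sum_swap[OF fB2 y(1) x(2), of \<gamma>] .
  have "sum \<gamma> (insert y (B1 - {x})) \<ge> l" "sum \<gamma> (insert x (B2 - {y})) \<ge> l" using cov b1 b2 by auto
  then have "sum \<gamma> (insert y (B1 - {x})) = l" using e1 e2 s1 s2 by linarith
  then show ?thesis using b1 y by blast
qed

lemma focal_exists:
  fixes \<gamma> :: "nat \<Rightarrow> nat"
  assumes a: "indep_matroid E I" and bc: "is_basic_cover E I l \<gamma>"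
  shows "\<exists>F. is_basis I F \<and> sum \<gamma> F = l"
proof (rule ccontr)
  assume na: "\<not> ?thesis"
  have cov: "\<forall>F. is_basis I F \<longrightarrow> sum \<gamma> F \<ge> l" using bc unfolding is_basic_cover_def is_cover_def by blast
  then have gt: "\<And>F. is_basis I F \<Longrightarrow> sum \<gamma> F \<ge> Suc l" using na by (meson le_antisym not_less_eq_eq)
  obtain B0 where "B0 \<in> I" "card B0 = mrank I" using rank_attained[OF a] by blast
  then have B0: "is_basis I B0" using basis_iff[OF a] by blast
  have "sum \<gamma> B0 > 0" using gt[OF B0] by simp
  then obtain i where i: "i \<in> B0" "\<gamma> i > 0"
    by (metis neq0_conv sum.neutral)
  have iE: "i \<in> E" using i B0 a unfolding is_basis_def indep_matroid_def by blast
  define \<gamma>' where "\<gamma>' = \<gamma>(i := \<gamma> i - 1)"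
  have "is_cover I l \<gamma>'" unfolding is_cover_def
  proof (intro allI impI)
    fix F assume F: "is_basis I F"
    have fF: "finite F" using F im_fin[OF a] unfolding is_basis_def by blast
    have "sum \<gamma> F \<le> sum \<gamma>' F + 1"
    proof (cases "i \<in> F")
      case True
      have "sum \<gamma> F = \<gamma> i + sum \<gamma> (F - {i})" using fF True sum.remove by metis
      moreover have "sum \<gamma>' F = \<gamma>' i + sum \<gamma>' (F - {i})" using fF True sum.remove by metis
      moreover have "sum \<gamma>' (F - {i}) = sum \<gamma> (F - {i})" unfolding \<gamma>'_def by (rule sum.cong) auto
      ultimately show ?thesis unfolding \<gamma>'_def by simp
    next
      case False
      have "sum \<gamma>' F = sum \<gamma> F" unfolding \<gamma>'_def using False by (intro sum.cong) auto
      then show ?thesis by simp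
    qed
    then show "l \<le> sum \<gamma>' F" using gt[OF F] by simp
  qed
  moreover have "\<forall>j\<in>E. \<gamma>' j \<le> \<gamma> j" unfolding \<gamma>'_def by simp
  ultimately have "\<gamma>' i = \<gamma> i" using bc iE unfolding is_basic_cover_def by blast
  then show False using i unfolding \<gamma>'_def by simp
qed


lemma focal_aug:
  fixes \<gamma> :: "nat \<Rightarrow> nat"
  assumes a: "indep_matroid E I" and cov: "\<forall>F. is_basis I F \<longrightarrow> sum \<gamma> F \<ge> l"
    and F2: "is_basis I F2" "sum \<gamma> F2 = l" and Y: "Y \<subseteq> F2" and XY: "card X < card Y"
  shows "\<forall>F1. is_basis I F1 \<and> sum \<gamma> F1 = l \<and> X \<subseteq> F1 \<and> card (F1 - F2) = k \<longrightarrow>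
     (\<exists>y\<in>Y-X. \<exists>F. is_basis I F \<and> sum \<gamma> F = l \<and> insert y X \<subseteq> F)"
proof (induction k rule: less_induct)
  case (less k)
  show ?case
  proof (intro allI impI)
    fix F1 assume F1: "is_basis I F1 \<and> sum \<gamma> F1 = l \<and> X \<subseteq> F1 \<and> card (F1 - F2) = k"
    have F1I: "F1 \<in> I" "card F1 = mrank I" using F1 basis_iff[OF a] by auto
    have F2I: "F2 \<in> I" "card F2 = mrank I" using F2 basis_iff[OF a] by auto
    have fF1: "finite F1" and fF2: "finite F2" using im_fin[OF a] F1I F2I by auto
    show "\<exists>y\<in>Y-X. \<exists>F. is_basis I F \<and> sum \<gamma> F = l \<and> insert y X \<subseteq> F"
    proof (cases "\<exists>y\<in>Y-X. y \<in> F1")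
      case True
      then show ?thesis using F1 by blast
    next
      case nY: False
      show ?thesis
      proof (cases "\<exists>z. z \<in> F1 - F2 - X")
        case True
        then obtain z where z: "z \<in> F1" "z \<notin> F2" "z \<notin> X" by blast
        obtain y where y: "y \<in> F2 - F1" "is_basis I (insert y (F1 - {z}))"
          "sum \<gamma> (insert y (F1 - {z})) = l"
          using wexch[OF a cov _ F2(1) _ F2(2) z(1) z(2)] F1 by blast
        have eq: "insert y (F1 - {z}) - F2 = (F1 - F2) - {z}" using y z by blast
        have "card ((F1 - F2) - {z}) < card (F1 - F2)" using z fF1
          by (meson DiffI card_Diff1_less finite_Diff)
        then have "card (insert y (F1 - {z}) - F2) < k" using eq F1 by simp
        moreover have "X \<subseteq> insert y (F1 - {z})" using F1 z by blast
        ultimately show ?thesis using less.IH y by blast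
      next
        case False
        then have sub: "F1 - X \<subseteq> F2 - Y" using nY by blast
        have fY: "finite Y" using Y fF2 finite_subset by blast
        have "X \<subseteq> F1" using F1 by blast
        then have "card (F1 - X) = mrank I - card X" using F1I fF1 by (metis card_Diff_subset finite_subset)
        moreover have "card (F2 - Y) = mrank I - card Y" using Y F2I fY by (simp add: card_Diff_subset)
        moreover have "card Y \<le> mrank I" using card_mono[OF fF2 Y] F2I by simp
        moreover have "card (F1 - X) \<le> card (F2 - Y)" using sub fF2 by (simp add: card_mono)
        ultimately show ?thesis using XY by linarith
      qed
    qed
  qed
qed

theorem corollary3p6:
  fixes n l :: nat and I :: "nat set set" and \<gamma> :: "nat \<Rightarrow> nat"
  assumes "indep_matroid {1..n} I"
    and "is_basic_cover {1..n} I l \<gamma>"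
  shows "indep_matroid {1..n} (focal_complex I l \<gamma>)
         \<and> focal_complex I l \<gamma> \<subseteq> I
         \<and> mrank (focal_complex I l \<gamma>) = mrank I"
proof -
  note a = assms(1)
  have cov: "\<forall>F. is_basis I F \<longrightarrow> sum \<gamma> F \<ge> l"
    using assms(2) unfolding is_basic_cover_def is_cover_def by blast
  obtain F0 where F0: "is_basis I F0" "sum \<gamma> F0 = l" using focal_exists[OF assms] by blast
  have mem: "\<And>G. G \<in> focal_complex I l \<gamma> \<longleftrightarrow> (\<exists>F. is_basis I F \<and> sum \<gamma> F = l \<and> G \<subseteq> F)"
    unfolding focal_complex_def by blast
  have sub: "focal_complex I l \<gamma> \<subseteq> I"
  proof
    fix G assume "G \<in> focal_complex I l \<gamma>"
    then obtain F where "is_basis I F" "G \<subseteq> F" using mem by blast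
    then show "G \<in> I" using im_sub[OF a] unfolding is_basis_def by blast
  qed
  have aug: "\<exists>y\<in>Y - X. insert y X \<in> focal_complex I l \<gamma>"
    if X: "X \<in> focal_complex I l \<gamma>" and Y: "Y \<in> focal_complex I l \<gamma>" and c: "card X < card Y" for X Y
  proof -
    obtain F1 where F1: "is_basis I F1" "sum \<gamma> F1 = l" "X \<subseteq> F1" using X mem by blast
    obtain F2 where F2: "is_basis I F2" "sum \<gamma> F2 = l" "Y \<subseteq> F2" using Y mem by blast
    have "\<exists>y\<in>Y-X. \<exists>F. is_basis I F \<and> sum \<gamma> F = l \<and> insert y X \<subseteq> F"
      using focal_aug[OF a cov F2(1) F2(2) F2(3) c, of "card (F1 - F2)"] F1 by blast
    then show ?thesis using mem by blast
  qed
  have m: "indep_matroid {1..n} (focal_complex I l \<gamma>)"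
    unfolding indep_matroid_def
  proof (intro conjI allI impI ballI)
    show "finite {1..n}" by simp
    show "X \<subseteq> {1..n}" if "X \<in> focal_complex I l \<gamma>" for X
      using that sub a unfolding indep_matroid_def by blast
    show "{} \<in> focal_complex I l \<gamma>" using mem F0 by blast
    show "Y \<in> focal_complex I l \<gamma>" if "X \<in> focal_complex I l \<gamma>" "Y \<subseteq> X" for X Y
      using that mem by (meson order_trans)
    show "\<exists>y\<in>Y - X. insert y X \<in> focal_complex I l \<gamma>"
      if "X \<in> focal_complex I l \<gamma>" "Y \<in> focal_complex I l \<gamma>" "card X < card Y" for X Y
      using aug that by blast
  qed
  have fin: "finite (focal_complex I l \<gamma>)" using im_finite[OF a] sub finite_subset by blast
  have F0in: "F0 \<in> focal_complex I l \<gamma>" using mem F0 by blast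
  have cF0: "card F0 = mrank I" using F0 basis_iff[OF a] by blast
  have "mrank (focal_complex I l \<gamma>) \<le> mrank I"
    unfolding mrank_def[of "focal_complex I l \<gamma>"] using fin F0in sub card_le_rank[OF a]
    by (subst Max_le_iff) auto
  moreover have "mrank I \<le> mrank (focal_complex I l \<gamma>)"
    unfolding mrank_def[of "focal_complex I l \<gamma>"] using fin F0in cF0
    by (metis Max_ge finite_imageI imageI)
  ultimately show ?thesis using m sub by simp
qed

end
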